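(* Let $Q$ be an admissible orientation of $\tilde A_n$ and let $I,J$ be two-sided ideals of $\Bbbk Q$. Then the multiplication map $\varphi_{I,J}:I\otimes_{\Bbbk Q}J\to IJ$, $a\otimes b\mapsto ab$, is an isomorphism of $\Bbbk Q$-$\Bbbk Q$-bimodules.
   Context: $\Bbbk$ is an algebraically closed field. An admissible orientation of $\tilde A_n$ is a finite quiver with $n$ vertices whose underlying undirected graph is a cycle, with no oriented cycle and at least one source. $IJ$ denotes the ideal spanned by all products $ab$ with $a\in I$, $b\in J$. *)

theory Defs
  imports "HOL-Computational_Algebra.Polynomial"
begin

definition alg_closed :: "'k::field itself \<Rightarrow> bool" where
  "alg_closed _ \<longleftrightarrow> (\<forall>p::'k poly. degree p > 0 \<longrightarrow> (\<exists>x. poly p x = 0))"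

text \<open>Vertices are 0,...,n-1; arrow i (i < n) joins vertex i and vertex (i+1) mod n.
  The orientation ori i says whether arrow i goes i -> (i+1) mod n (True) or the
  other way (False).\<close>

definition arr_src :: "(nat \<Rightarrow> bool) \<Rightarrow> nat \<Rightarrow> nat \<Rightarrow> nat" where
  "arr_src ori n i = (if ori i then i else Suc i mod n)"

definition arr_tgt :: "(nat \<Rightarrow> bool) \<Rightarrow> nat \<Rightarrow> nat \<Rightarrow> nat" where
  "arr_tgt ori n i = (if ori i then Suc i mod n else i)"

text \<open>A path is a start vertex together with a list of arrows, traversed left to right;
  (v, []) is the trivial path e_v.\<close>

type_synonym qpath = "nat \<times> nat list"

fun valid_path :: "(nat \<Rightarrow> bool) \<Rightarrow> nat \<Rightarrow> qpath \<Rightarrow> bool" where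
  "valid_path ori n (v, as) \<longleftrightarrow>
     v < n \<and> (\<forall>a\<in>set as. a < n) \<and>
     (as \<noteq> [] \<longrightarrow> arr_src ori n (hd as) = v) \<and>
     (\<forall>i. Suc i < length as \<longrightarrow> arr_tgt ori n (as ! i) = arr_src ori n (as ! Suc i))"

fun path_end :: "(nat \<Rightarrow> bool) \<Rightarrow> nat \<Rightarrow> qpath \<Rightarrow> nat" where
  "path_end ori n (v, as) = (if as = [] then v else arr_tgt ori n (last as))"

definition has_oriented_cycle :: "(nat \<Rightarrow> bool) \<Rightarrow> nat \<Rightarrow> bool" where
  "has_oriented_cycle ori n \<longleftrightarrow>
     (\<exists>v as. as \<noteq> [] \<and> valid_path ori n (v, as) \<and> path_end ori n (v, as) = v)"

definition is_source :: "(nat \<Rightarrow> bool) \<Rightarrow> nat \<Rightarrow> nat \<Rightarrow> bool" where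
  "is_source ori n v \<longleftrightarrow> v < n \<and> (\<forall>i<n. arr_tgt ori n i \<noteq> v)"

definition admissible :: "(nat \<Rightarrow> bool) \<Rightarrow> nat \<Rightarrow> bool" where
  "admissible ori n \<longleftrightarrow> \<not> has_oriented_cycle ori n \<and> (\<exists>v. is_source ori n v)"

text \<open>Elements of kQ are k-valued functions on paths vanishing off valid paths
  (kQ is finite dimensional since Q is acyclic; in general one would add finite support).\<close>

definition path_alg :: "(nat \<Rightarrow> bool) \<Rightarrow> nat \<Rightarrow> (qpath \<Rightarrow> 'k::field) set" where
  "path_alg ori n = {f. finite {p. f p \<noteq> 0} \<and> (\<forall>p. \<not> valid_path ori n p \<longrightarrow> f p = 0)}"

definition pmult :: "(nat \<Rightarrow> bool) \<Rightarrow> nat \<Rightarrow> (qpath \<Rightarrow> 'k::field) \<Rightarrow> (qpath \<Rightarrow> 'k) \<Rightarrow> (qpath \<Rightarrow> 'k)" where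
  "pmult ori n f g = (\<lambda>(v, as). if valid_path ori n (v, as) then
      (\<Sum>k\<le>length as. f (v, take k as) * g (path_end ori n (v, take k as), drop k as))
    else 0)"

definition is_ideal :: "(nat \<Rightarrow> bool) \<Rightarrow> nat \<Rightarrow> (qpath \<Rightarrow> 'k::field) set \<Rightarrow> bool" where
  "is_ideal ori n I \<longleftrightarrow>
     I \<subseteq> path_alg ori n \<and> (\<lambda>_. 0) \<in> I \<and>
     (\<forall>a\<in>I. \<forall>b\<in>I. (\<lambda>p. a p + b p) \<in> I) \<and>
     (\<forall>c a. a \<in> I \<longrightarrow> (\<lambda>p. c * a p) \<in> I) \<and>
     (\<forall>r\<in>path_alg ori n. \<forall>a\<in>I. pmult ori n r a \<in> I \<and> pmult ori n a r \<in> I)"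

definition ideal_prod :: "(nat \<Rightarrow> bool) \<Rightarrow> nat \<Rightarrow> (qpath \<Rightarrow> 'k::field) set \<Rightarrow> (qpath \<Rightarrow> 'k) set \<Rightarrow> (qpath \<Rightarrow> 'k) set" where
  "ideal_prod ori n I J =
     {f. \<exists>ps. set ps \<subseteq> I \<times> J \<and> f = (\<lambda>p. \<Sum>q\<leftarrow>ps. pmult ori n (fst q) (snd q) p)}"

section \<open>The tensor product I \<otimes>_kQ J, as free k-vector space on I \<times> J modulo relations\<close>

definition free_mod :: "'e set \<Rightarrow> 'e set \<Rightarrow> ('e \<times> 'e \<Rightarrow> 'k::field) set" where
  "free_mod I J = {x. finite {q. x q \<noteq> 0} \<and> {q. x q \<noteq> 0} \<subseteq> I \<times> J}"

definition delta :: "'e \<times> 'e \<Rightarrow> ('e \<times> 'e \<Rightarrow> 'k::field)" where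
  "delta q = (\<lambda>q'. if q' = q then 1 else 0)"

inductive_set tens_rel :: "(nat \<Rightarrow> bool) \<Rightarrow> nat \<Rightarrow> (qpath \<Rightarrow> 'k::field) set \<Rightarrow> (qpath \<Rightarrow> 'k) set
    \<Rightarrow> ((qpath \<Rightarrow> 'k) \<times> (qpath \<Rightarrow> 'k) \<Rightarrow> 'k) set"
  for ori n I J where
  zero: "(\<lambda>_. 0) \<in> tens_rel ori n I J"
| add: "x \<in> tens_rel ori n I J \<Longrightarrow> y \<in> tens_rel ori n I J \<Longrightarrow> (\<lambda>q. x q + y q) \<in> tens_rel ori n I J"
| smult: "x \<in> tens_rel ori n I J \<Longrightarrow> (\<lambda>q. c * x q) \<in> tens_rel ori n I J"
| add_left: "a \<in> I \<Longrightarrow> a' \<in> I \<Longrightarrow> b \<in> J \<Longrightarrow>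
    (\<lambda>q. delta ((\<lambda>p. a p + a' p), b) q - delta (a, b) q - delta (a', b) q) \<in> tens_rel ori n I J"
| add_right: "a \<in> I \<Longrightarrow> b \<in> J \<Longrightarrow> b' \<in> J \<Longrightarrow>
    (\<lambda>q. delta (a, (\<lambda>p. b p + b' p)) q - delta (a, b) q - delta (a, b') q) \<in> tens_rel ori n I J"
| smult_left: "a \<in> I \<Longrightarrow> b \<in> J \<Longrightarrow>
    (\<lambda>q. delta ((\<lambda>p. c * a p), b) q - c * delta (a, b) q) \<in> tens_rel ori n I J"
| smult_right: "a \<in> I \<Longrightarrow> b \<in> J \<Longrightarrow>
    (\<lambda>q. delta (a, (\<lambda>p. c * b p)) q - c * delta (a, b) q) \<in> tens_rel ori n I J"
| balanced: "a \<in> I \<Longrightarrow> b \<in> J \<Longrightarrow> r \<in> path_alg ori n \<Longrightarrow>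
    (\<lambda>q. delta (pmult ori n a r, b) q - delta (a, pmult ori n r b) q) \<in> tens_rel ori n I J"

definition tens_mult :: "(nat \<Rightarrow> bool) \<Rightarrow> nat \<Rightarrow> ((qpath \<Rightarrow> 'k::field) \<times> (qpath \<Rightarrow> 'k) \<Rightarrow> 'k) \<Rightarrow> (qpath \<Rightarrow> 'k)" where
  "tens_mult ori n x = (\<lambda>p. \<Sum>q\<in>{q. x q \<noteq> 0}. x q * pmult ori n (fst q) (snd q) p)"

end

theory Submission imports Defs "HOL-Library.List_Lexorder" "HOL-Library.Product_Lexorder" begin

lemma pe_append: "path_end ori n (v, as @ bs) = path_end ori n (path_end ori n (v, as), bs)"
  by (cases "bs = []") auto

lemma valid_take: "valid_path ori n (v, as) \<Longrightarrow> valid_path ori n (v, take k as)"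
  by (auto dest: in_set_takeD simp: hd_take)

lemma pe_lt: "valid_path ori n p \<Longrightarrow> path_end ori n p < n"
proof (cases p)
  case (Pair v as)
  assume V: "valid_path ori n p"
  show ?thesis
  proof (cases "as = []")
    case True then show ?thesis using V Pair by simp
  next
    case False
    then have "last as < n" using V Pair by auto
    moreover have "n > 0" using V Pair by auto
    ultimately show ?thesis using False Pair by (auto simp: arr_tgt_def)
  qed
qed

lemma valid_drop:
  assumes V: "valid_path ori n (v, as)"
  shows "valid_path ori n (path_end ori n (v, take k as), drop k as)"
proof -
  have w: "path_end ori n (v, take k as) < n" using pe_lt[OF valid_take[OF V]] .
  have hd: "arr_src ori n (hd (drop k as)) = path_end ori n (v, take k as)" if "drop k as \<noteq> []"
  proof -
    have k: "k < length as" using that by simp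
    have h: "hd (drop k as) = as ! k" using k by (simp add: hd_drop_conv_nth)
    show ?thesis
    proof (cases k)
      case 0 then show ?thesis using V k by (cases as) auto
    next
      case (Suc j)
      have "take k as \<noteq> []" using Suc k by (cases as) auto
      moreover have "last (take k as) = as ! j" using Suc k \<open>take k as \<noteq> []\<close> by (simp add: last_conv_nth min_def)
      moreover have "arr_tgt ori n (as ! j) = arr_src ori n (as ! Suc j)" using V Suc k by auto
      ultimately show ?thesis using h Suc by simp
    qed
  qed
  show ?thesis using w hd V by (auto dest: in_set_dropD)
qed

lemma valid_cat:
  assumes V1: "valid_path ori n (v, as)" and V2: "valid_path ori n (w, bs)"
    and E: "path_end ori n (v, as) = w"
  shows "valid_path ori n (v, as @ bs)"
proof -
  have hd: "as @ bs \<noteq> [] \<longrightarrow> arr_src ori n (hd (as @ bs)) = v"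
    using V1 V2 E by (cases "as = []") auto
  have ch: "arr_tgt ori n ((as @ bs) ! i) = arr_src ori n ((as @ bs) ! Suc i)"
    if "Suc i < length (as @ bs)" for i
  proof -
    consider "Suc i < length as" | "Suc i = length as" | "Suc i > length as" by linarith
    then show ?thesis
    proof cases
      case 1 then show ?thesis using V1 by (auto simp: nth_append)
    next
      case 2
      then have "as \<noteq> []" by auto
      moreover have "last as = as ! i" using 2 \<open>as \<noteq> []\<close> last_conv_nth[of as] by (metis diff_Suc_1)
      moreover have "bs \<noteq> []" using that 2 by auto
      moreover have "hd bs = bs ! 0" by (simp add: hd_conv_nth \<open>bs \<noteq> []\<close>)
      ultimately show ?thesis using 2 V2 E by (auto simp: nth_append)
    next
      case 3
      then have "Suc (i - length as) < length bs" "Suc i - length as = Suc (i - length as)" using that by auto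
      then show ?thesis using 3 V2 by (auto simp: nth_append)
    qed
  qed
  show ?thesis using V1 V2 hd ch by auto
qed

declare valid_path.simps[simp del] path_end.simps[simp del]

lemma pmult_apply: "pmult ori n f g (v, as) = (if valid_path ori n (v, as) then
      (\<Sum>k\<le>length as. f (v, take k as) * g (path_end ori n (v, take k as), drop k as)) else 0)"
  by (simp add: pmult_def)

lemma tri_reindex:
  fixes F :: "nat \<Rightarrow> nat \<Rightarrow> 'a::comm_monoid_add"
  shows "(\<Sum>k\<le>L. \<Sum>j\<le>k. F j k) = (\<Sum>j\<le>L. \<Sum>i\<le>L-j. F j (j+i))"
proof (induction L)
  case 0 then show ?case by simp
next
  case (Suc L)
  have "(\<Sum>j\<le>Suc L. \<Sum>i\<le>Suc L-j. F j (j+i))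
      = (\<Sum>j\<le>L. \<Sum>i\<le>Suc L-j. F j (j+i)) + F (Suc L) (Suc L)" by simp
  also have "(\<Sum>j\<le>L. \<Sum>i\<le>Suc L-j. F j (j+i)) = (\<Sum>j\<le>L. (\<Sum>i\<le>L-j. F j (j+i)) + F j (Suc L))"
  proof (rule sum.cong[OF refl])
    fix j assume "j \<in> {..L}"
    then have "Suc L - j = Suc (L - j)" "j + Suc (L - j) = Suc L" by auto
    then show "(\<Sum>i\<le>Suc L-j. F j (j+i)) = (\<Sum>i\<le>L-j. F j (j+i)) + F j (Suc L)" by simp
  qed
  finally show ?case using Suc by (simp add: sum.distrib add.assoc)
qed

lemma pmult_assoc: "pmult ori n (pmult ori n f g) h = pmult ori n f (pmult ori n g h)"
proof (rule ext, clarify)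
  fix v as
  show "pmult ori n (pmult ori n f g) h (v, as) = pmult ori n f (pmult ori n g h) (v, as)"
  proof (cases "valid_path ori n (v, as)")
    case False then show ?thesis by (simp add: pmult_apply)
  next
    case V: True
    define L where "L = length as"
    define F where "F j k = f (v, take j as) * g (path_end ori n (v, take j as), drop j (take k as))
       * h (path_end ori n (v, take k as), drop k as)" for j k
    have "pmult ori n (pmult ori n f g) h (v, as)
        = (\<Sum>k\<le>L. pmult ori n f g (v, take k as) * h (path_end ori n (v, take k as), drop k as))"
      using V by (simp add: pmult_apply L_def)
    also have "\<dots> = (\<Sum>k\<le>L. \<Sum>j\<le>k. F j k)"
    proof (rule sum.cong[OF refl])
      fix k assume k: "k \<in> {..L}"
      have lk: "length (take k as) = k" using k by (simp add: L_def)
      have "pmult ori n f g (v, take k as) = (\<Sum>j\<le>k. f (v, take j (take k as)) * g (path_end ori n (v, take j (take k as)), drop j (take k as)))"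
        using valid_take[OF V, of k] k by (simp add: pmult_apply L_def min_def)
      also have "\<dots> = (\<Sum>j\<le>k. f (v, take j as) * g (path_end ori n (v, take j as), drop j (take k as)))"
        by (rule sum.cong[OF refl]) (simp add: take_take min_def)
      finally have "pmult ori n f g (v, take k as) = (\<Sum>j\<le>k. f (v, take j as) * g (path_end ori n (v, take j as), drop j (take k as)))" .
      then show "pmult ori n f g (v, take k as) * h (path_end ori n (v, take k as), drop k as) = (\<Sum>j\<le>k. F j k)"
        by (simp add: F_def sum_distrib_right)
    qed
    also have "\<dots> = (\<Sum>j\<le>L. \<Sum>i\<le>L-j. F j (j+i))" by (rule tri_reindex)
    also have "\<dots> = (\<Sum>j\<le>L. f (v, take j as) * pmult ori n g h (path_end ori n (v, take j as), drop j as))"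
    proof (rule sum.cong[OF refl])
      fix j assume j: "j \<in> {..L}"
      have VD: "valid_path ori n (path_end ori n (v, take j as), drop j as)" by (rule valid_drop[OF V])
      have "pmult ori n g h (path_end ori n (v, take j as), drop j as)
          = (\<Sum>i\<le>L-j. g (path_end ori n (v, take j as), take i (drop j as))
              * h (path_end ori n (path_end ori n (v, take j as), take i (drop j as)), drop i (drop j as)))"
        using VD by (simp add: pmult_apply L_def)
      also have "\<dots> = (\<Sum>i\<le>L-j. g (path_end ori n (v, take j as), drop j (take (j+i) as))
              * h (path_end ori n (v, take (j+i) as), drop (j+i) as))"
      proof (rule sum.cong[OF refl])
        fix i
        have "path_end ori n (path_end ori n (v, take j as), take i (drop j as)) = path_end ori n (v, take (j+i) as)"
          by (simp add: take_add pe_append)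
        then show "g (path_end ori n (v, take j as), take i (drop j as))
              * h (path_end ori n (path_end ori n (v, take j as), take i (drop j as)), drop i (drop j as))
            = g (path_end ori n (v, take j as), drop j (take (j+i) as))
              * h (path_end ori n (v, take (j+i) as), drop (j+i) as)"
          by (simp add: take_drop add.commute)
      qed
      finally show "(\<Sum>i\<le>L-j. F j (j+i)) = f (v, take j as) * pmult ori n g h (path_end ori n (v, take j as), drop j as)"
        by (simp add: F_def sum_distrib_left mult.assoc)
    qed
    also have "\<dots> = pmult ori n f (pmult ori n g h) (v, as)"
      using V by (simp add: pmult_apply L_def)
    finally show ?thesis .
  qed
qed

lemma pm_add_l: "pmult ori n (\<lambda>p. a p + a' p) b = (\<lambda>p. pmult ori n a b p + pmult ori n a' b p)"
  by (rule ext, clarify) (simp add: pmult_apply sum.distrib distrib_right)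

lemma pm_add_r: "pmult ori n a (\<lambda>p. b p + b' p) = (\<lambda>p. pmult ori n a b p + pmult ori n a b' p)"
  by (rule ext, clarify) (simp add: pmult_apply sum.distrib distrib_left)

lemma pm_smult_l: "pmult ori n (\<lambda>p. c * a p) b = (\<lambda>p. c * pmult ori n a b p)"
  by (rule ext, clarify) (simp add: pmult_apply sum_distrib_left mult_ac)

lemma pm_smult_r: "pmult ori n a (\<lambda>p. c * b p) = (\<lambda>p. c * pmult ori n a b p)"
  by (rule ext, clarify) (simp add: pmult_apply sum_distrib_left mult_ac)

lemma pm_zero_r: "pmult ori n a (\<lambda>p. 0) = (\<lambda>p. 0)"
  by (rule ext, clarify) (simp add: pmult_apply)

lemma tm_eq:
  assumes "finite T" "{q. x q \<noteq> 0} \<subseteq> T"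
  shows "tens_mult ori n x p = (\<Sum>q\<in>T. x q * pmult ori n (fst q) (snd q) p)"
  unfolding tens_mult_def using assms by (intro sum.mono_neutral_left) auto

lemma tm_add:
  assumes "finite {q. x q \<noteq> 0}" "finite {q. y q \<noteq> 0}"
  shows "tens_mult ori n (\<lambda>q. x q + y q) = (\<lambda>p. tens_mult ori n x p + tens_mult ori n y p)"
proof
  fix p
  let ?T = "{q. x q \<noteq> 0} \<union> {q. y q \<noteq> 0}"
  have f: "finite ?T" using assms by simp
  have "tens_mult ori n (\<lambda>q. x q + y q) p = (\<Sum>q\<in>?T. (x q + y q) * pmult ori n (fst q) (snd q) p)"
    by (rule tm_eq[OF f]) auto
  also have "\<dots> = (\<Sum>q\<in>?T. x q * pmult ori n (fst q) (snd q) p) + (\<Sum>q\<in>?T. y q * pmult ori n (fst q) (snd q) p)"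
    by (simp add: distrib_right sum.distrib)
  also have "\<dots> = tens_mult ori n x p + tens_mult ori n y p"
    by (simp add: tm_eq[OF f])
  finally show "tens_mult ori n (\<lambda>q. x q + y q) p = tens_mult ori n x p + tens_mult ori n y p" .
qed

lemma tm_diff:
  assumes "finite {q. x q \<noteq> 0}" "finite {q. y q \<noteq> 0}"
  shows "tens_mult ori n (\<lambda>q. x q - y q) = (\<lambda>p. tens_mult ori n x p - tens_mult ori n y p)"
proof
  fix p
  let ?T = "{q. x q \<noteq> 0} \<union> {q. y q \<noteq> 0}"
  have f: "finite ?T" using assms by simp
  have "tens_mult ori n (\<lambda>q. x q - y q) p = (\<Sum>q\<in>?T. (x q - y q) * pmult ori n (fst q) (snd q) p)"
    by (rule tm_eq[OF f]) auto
  also have "\<dots> = (\<Sum>q\<in>?T. x q * pmult ori n (fst q) (snd q) p) - (\<Sum>q\<in>?T. y q * pmult ori n (fst q) (snd q) p)"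
    by (simp add: left_diff_distrib sum_subtractf)
  also have "\<dots> = tens_mult ori n x p - tens_mult ori n y p"
    by (simp add: tm_eq[OF f])
  finally show "tens_mult ori n (\<lambda>q. x q - y q) p = tens_mult ori n x p - tens_mult ori n y p" .
qed

lemma tm_smult:
  assumes "finite {q. x q \<noteq> 0}"
  shows "tens_mult ori n (\<lambda>q. c * x q) = (\<lambda>p. c * tens_mult ori n x p)"
proof
  fix p
  have "tens_mult ori n (\<lambda>q. c * x q) p = (\<Sum>q\<in>{q. x q \<noteq> 0}. (c * x q) * pmult ori n (fst q) (snd q) p)"
    by (rule tm_eq[OF assms]) auto
  also have "\<dots> = c * tens_mult ori n x p"
    by (simp add: tm_eq[OF assms] sum_distrib_left mult.assoc)
  finally show "tens_mult ori n (\<lambda>q. c * x q) p = c * tens_mult ori n x p" .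
qed

lemma supp_delta: "{q. (delta q0 :: _ \<Rightarrow> 'k::field) q \<noteq> 0} = {q0}"
  by (auto simp: delta_def)

lemma fin_delta: "finite {q. (delta q0 :: _ \<Rightarrow> 'k::field) q \<noteq> 0}"
  by (simp add: supp_delta)

lemma tm_delta: "tens_mult ori n (delta q0 :: _ \<Rightarrow> 'k::field) = pmult ori n (fst q0) (snd q0)"
  by (rule ext) (simp add: tens_mult_def supp_delta delta_def)

lemma fin_add: "finite {q. x q \<noteq> 0} \<Longrightarrow> finite {q. y q \<noteq> 0} \<Longrightarrow> finite {q. (x q :: 'k::field) + y q \<noteq> 0}"
  by (rule finite_subset[of _ "{q. x q \<noteq> 0} \<union> {q. y q \<noteq> 0}"]) auto

lemma fin_diff: "finite {q. x q \<noteq> 0} \<Longrightarrow> finite {q. y q \<noteq> 0} \<Longrightarrow> finite {q. (x q :: 'k::field) - y q \<noteq> 0}"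
  by (rule finite_subset[of _ "{q. x q \<noteq> 0} \<union> {q. y q \<noteq> 0}"]) auto

lemma fin_smult: "finite {q. x q \<noteq> 0} \<Longrightarrow> finite {q. c * (x q :: 'k::field) \<noteq> 0}"
  by (rule finite_subset[of _ "{q. x q \<noteq> 0}"]) auto

lemma fin_d3: "finite {q. (delta q1 q :: 'k::field) - delta q2 q - delta q3 q \<noteq> 0}"
  by (rule finite_subset[of _ "{q1,q2,q3}"]) (auto simp: delta_def)

lemma fin_d2c: "finite {q. (delta q1 q :: 'k::field) - c * delta q2 q \<noteq> 0}"
  by (rule finite_subset[of _ "{q1,q2}"]) (auto simp: delta_def)

lemma tm_d3: "tens_mult ori n (\<lambda>q. (delta q1 q :: 'k::field) - delta q2 q - delta q3 q)
   = (\<lambda>p. pmult ori n (fst q1) (snd q1) p - pmult ori n (fst q2) (snd q2) p - pmult ori n (fst q3) (snd q3) p)"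
proof -
  define x :: "_ \<Rightarrow> 'k" where "x = (\<lambda>q. delta q1 q - delta q2 q)"
  have fx: "finite {q. x q \<noteq> 0}" unfolding x_def by (rule fin_diff[OF fin_delta fin_delta])
  have "tens_mult ori n (\<lambda>q. x q - delta q3 q) = (\<lambda>p. tens_mult ori n x p - tens_mult ori n (delta q3) p)"
    by (rule tm_diff[OF fx fin_delta])
  moreover have "tens_mult ori n x = (\<lambda>p. tens_mult ori n (delta q1) p - tens_mult ori n (delta q2) p)"
    unfolding x_def by (rule tm_diff[OF fin_delta fin_delta])
  ultimately show ?thesis by (simp add: x_def tm_delta)
qed

lemma tm_d2c: "tens_mult ori n (\<lambda>q. (delta q1 q :: 'k::field) - c * delta q2 q)
   = (\<lambda>p. pmult ori n (fst q1) (snd q1) p - c * pmult ori n (fst q2) (snd q2) p)"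
proof -
  define y :: "_ \<Rightarrow> 'k" where "y = (\<lambda>q. c * delta q2 q)"
  have fy: "finite {q. y q \<noteq> 0}" unfolding y_def by (rule fin_smult[OF fin_delta])
  have "tens_mult ori n (\<lambda>q. delta q1 q - y q) = (\<lambda>p. tens_mult ori n (delta q1) p - tens_mult ori n y p)"
    by (rule tm_diff[OF fin_delta fy])
  moreover have "tens_mult ori n y = (\<lambda>p. c * tens_mult ori n (delta q2) p)"
    unfolding y_def by (rule tm_smult[OF fin_delta])
  ultimately show ?thesis by (simp add: y_def tm_delta)
qed

lemma tm_d2: "tens_mult ori n (\<lambda>q. (delta q1 q :: 'k::field) - delta q2 q)
   = (\<lambda>p. pmult ori n (fst q1) (snd q1) p - pmult ori n (fst q2) (snd q2) p)"
  using tm_diff[OF fin_delta fin_delta, of ori n q1 q2] by (simp add: tm_delta)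

lemma rel_tm:
  assumes "x \<in> tens_rel ori n I J"
  shows "finite {q. x q \<noteq> 0} \<and> tens_mult ori n x = (\<lambda>_. 0)"
  using assms
proof (induction rule: tens_rel.induct)
  case zero
  then show ?case by (simp add: tens_mult_def)
next
  case (add x y)
  then show ?case by (simp add: tm_add fin_add)
next
  case (smult x c)
  then show ?case by (simp add: tm_smult fin_smult)
next
  case (add_left a a' b)
  show ?case using fin_d3 by (simp only: tm_d3) (simp add: pm_add_l)
next
  case (add_right a b b')
  show ?case using fin_d3 by (simp only: tm_d3) (simp add: pm_add_r)
next
  case (smult_left a b c)
  show ?case using fin_d2c by (simp only: tm_d2c) (simp add: pm_smult_l)
next
  case (smult_right a b c)
  show ?case using fin_d2c by (simp only: tm_d2c) (simp add: pm_smult_r)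
next
  case (balanced a b r)
  show ?case using fin_diff[OF fin_delta fin_delta] by (simp only: tm_d2) (simp add: pmult_assoc)
qed

lemma ideal_prod_sub:
  assumes "set ps \<subseteq> I \<times> J"
  shows "\<exists>x\<in>free_mod I J. tens_mult ori n x = (\<lambda>p. \<Sum>q\<leftarrow>ps. pmult ori n (fst q) (snd q) p)"
  using assms
proof (induction ps)
  case Nil
  show ?case by (rule bexI[of _ "\<lambda>_. 0"]) (auto simp: free_mod_def tens_mult_def)
next
  case (Cons q ps)
  then obtain x where x: "x \<in> free_mod I J" "tens_mult ori n x = (\<lambda>p. \<Sum>q\<leftarrow>ps. pmult ori n (fst q) (snd q) p)"
    by auto
  have fx: "finite {q. x q \<noteq> 0}" using x by (simp add: free_mod_def)
  have "(\<lambda>r. delta q r + x r) \<in> free_mod I J"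
    using x Cons.prems fin_add[OF fin_delta fx] by (auto simp: free_mod_def delta_def split: if_splits)
  moreover have "tens_mult ori n (\<lambda>r. delta q r + x r) = (\<lambda>p. \<Sum>q\<leftarrow>q#ps. pmult ori n (fst q) (snd q) p)"
    using tm_add[OF fin_delta fx] x by (simp add: tm_delta)
  ultimately show ?case by blast
qed

lemma image_eq:
  assumes "is_ideal ori n I"
  shows "tens_mult ori n ` free_mod I J = ideal_prod ori n I J"
proof
  show "ideal_prod ori n I J \<subseteq> tens_mult ori n ` free_mod I J"
    proof
    fix f assume "f \<in> ideal_prod ori n I J"
    then obtain ps where "set ps \<subseteq> I \<times> J" "f = (\<lambda>p. \<Sum>q\<leftarrow>ps. pmult ori n (fst q) (snd q) p)"
      unfolding ideal_prod_def by blast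
    then show "f \<in> tens_mult ori n ` free_mod I J" using ideal_prod_sub[of ps I J ori n] by force
  qed
next
  show "tens_mult ori n ` free_mod I J \<subseteq> ideal_prod ori n I J"
  proof
    fix f assume "f \<in> tens_mult ori n ` free_mod I J"
    then obtain x where x: "x \<in> free_mod I J" and f: "f = tens_mult ori n x" by auto
    have fx: "finite {q. x q \<noteq> 0}" and sx: "{q. x q \<noteq> 0} \<subseteq> I \<times> J" using x by (auto simp: free_mod_def)
    obtain xs where xs: "set xs = {q. x q \<noteq> 0}" "distinct xs" using finite_distinct_list[OF fx] by blast
    define ps where "ps = map (\<lambda>q. (\<lambda>p. x q * fst q p, snd q)) xs"
    have "set ps \<subseteq> I \<times> J" using sx xs assms by (auto simp: ps_def is_ideal_def)
    moreover have "f = (\<lambda>p. \<Sum>q\<leftarrow>ps. pmult ori n (fst q) (snd q) p)"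
    proof
      fix p
      have "f p = (\<Sum>q\<in>set xs. x q * pmult ori n (fst q) (snd q) p)"
        using f xs by (simp add: tens_mult_def)
      also have "\<dots> = (\<Sum>q\<leftarrow>xs. x q * pmult ori n (fst q) (snd q) p)"
        using xs by (simp add: sum_list_distinct_conv_sum_set)
      also have "\<dots> = (\<Sum>q\<leftarrow>ps. pmult ori n (fst q) (snd q) p)"
        by (simp add: ps_def o_def pm_smult_l)
      finally show "f p = (\<Sum>q\<leftarrow>ps. pmult ori n (fst q) (snd q) p)" .
    qed
    ultimately show "f \<in> ideal_prod ori n I J" unfolding ideal_prod_def by blast
  qed
qed

definition key :: "qpath \<Rightarrow> nat \<times> nat list \<times> nat" where
  "key p = (length (snd p), snd p, fst p)"

lemma key_inj: "key p = key q \<Longrightarrow> p = q"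
  by (cases p; cases q) (simp add: key_def)

lemma list_less_app: "length as = length as0 \<Longrightarrow> (as::nat list) < as0 \<Longrightarrow> as @ bs < as0 @ bs0"
  by (simp add: list_less_def lexord_sufI)

lemma list_less_pref: "(bs::nat list) < bs0 \<Longrightarrow> as @ bs < as @ bs0"
  by (simp add: list_less_def lexord_append_leftI)

lemma key_mono:
  assumes Vs: "valid_path ori n (v, as)" and Vs0: "valid_path ori n (v0, as0)"
    and E1: "path_end ori n (v, as) = w" and E2: "path_end ori n (v0, as0) = w"
    and K1: "key (v, as) \<le> key (v0, as0)" and K2: "key (w, bs) \<le> key (w, bs0)"
  shows "key (v, as @ bs) \<le> key (v0, as0 @ bs0) \<and>
    (key (v, as @ bs) = key (v0, as0 @ bs0) \<longrightarrow> v = v0 \<and> as = as0 \<and> bs = bs0)"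
proof -
  have L1: "length as \<le> length as0" using K1 by (auto simp: key_def less_eq_prod_def)
  have L2: "length bs \<le> length bs0" using K2 by (auto simp: key_def less_eq_prod_def)
  show ?thesis
  proof (cases "length as + length bs < length as0 + length bs0")
    case True then show ?thesis by (auto simp: key_def less_eq_prod_def)
  next
    case False
    note F = this
    have LL: "length as = length as0" "length bs = length bs0" using F L1 L2 by auto
    show ?thesis
    proof (cases "as = as0")
      case False
      then have "as < as0" using K1 LL by (auto simp: key_def less_eq_prod_def less_prod_def)
      then have "as @ bs < as0 @ bs0" using LL by (simp add: list_less_app)
      then show ?thesis using LL by (auto simp: key_def less_eq_prod_def)
    next
      case True
      have vv: "v = v0"
      proof (cases "as = []")
        case True then show ?thesis using E1 E2 \<open>as = as0\<close> by (simp add: path_end.simps)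
      next
        case False then show ?thesis using Vs Vs0 \<open>as = as0\<close> by (simp add: valid_path.simps)
      qed
      show ?thesis
      proof (cases "bs = bs0")
        case False
        then have "bs < bs0" using K2 LL by (auto simp: key_def less_eq_prod_def less_prod_def)
        then have "as @ bs < as0 @ bs0" using True by (simp add: list_less_pref)
        then show ?thesis using LL by (auto simp: key_def less_eq_prod_def)
      next
        case True
        then show ?thesis using vv \<open>as = as0\<close> by simp
      qed
    qed
  qed
qed

definition chi :: "qpath \<Rightarrow> qpath \<Rightarrow> 'k::field" where
  "chi q = (\<lambda>p. if p = q then 1 else 0)"

definition rh :: "(nat \<Rightarrow> bool) \<Rightarrow> nat \<Rightarrow> nat \<Rightarrow> (qpath \<Rightarrow> 'k::field) \<Rightarrow> bool" where
  "rh ori n w a \<longleftrightarrow> (\<forall>p. a p \<noteq> 0 \<longrightarrow> path_end ori n p = w)"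

definition lh :: "nat \<Rightarrow> (qpath \<Rightarrow> 'k::field) \<Rightarrow> bool" where
  "lh w a \<longleftrightarrow> (\<forall>p. a p \<noteq> 0 \<longrightarrow> fst p = w)"

lemma pa_valid: "a \<in> path_alg ori n \<Longrightarrow> a p \<noteq> 0 \<Longrightarrow> valid_path ori n p"
  unfolding path_alg_def by blast

lemma pa_fin: "a \<in> path_alg ori n \<Longrightarrow> finite {p. a p \<noteq> 0}"
  by (auto simp: path_alg_def)

lemma chi_pa: "valid_path ori n q \<Longrightarrow> chi q \<in> path_alg ori n"
  by (auto simp: path_alg_def chi_def)

lemma PL:
  assumes x: "x \<in> path_alg ori n" and y: "y \<in> path_alg ori n"
    and rx: "rh ori n w x" and ly: "lh w y"
    and Vs0: "valid_path ori n (v0, as0)" and Vt0: "valid_path ori n (w, bs0)"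
    and E: "path_end ori n (v0, as0) = w"
    and Kx: "\<forall>p. x p \<noteq> 0 \<longrightarrow> key p \<le> key (v0, as0)"
    and Ky: "\<forall>p. y p \<noteq> 0 \<longrightarrow> key p \<le> key (w, bs0)"
  shows "(\<forall>p. pmult ori n x y p \<noteq> 0 \<longrightarrow> key p \<le> key (v0, as0 @ bs0))
    \<and> pmult ori n x y (v0, as0 @ bs0) = x (v0, as0) * y (w, bs0)"
proof -
  have trm: "key (v, cs) \<le> key (v0, as0 @ bs0) \<and>
      (key (v, cs) = key (v0, as0 @ bs0) \<longrightarrow> take k cs = as0)"
    if nz: "x (v, take k cs) * y (path_end ori n (v, take k cs), drop k cs) \<noteq> 0" for v cs k
  proof -
    have xs: "x (v, take k cs) \<noteq> 0" and yt: "y (path_end ori n (v, take k cs), drop k cs) \<noteq> 0" using nz by auto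
    have Vs: "valid_path ori n (v, take k cs)" using pa_valid[OF x xs] .
    have Es: "path_end ori n (v, take k cs) = w" using rx xs by (auto simp: rh_def)
    have yt': "y (w, drop k cs) \<noteq> 0" using yt Es by simp
    have "key (v, take k cs) \<le> key (v0, as0)" using Kx xs by blast
    moreover have "key (w, drop k cs) \<le> key (w, bs0)" using Ky yt' by blast
    ultimately have "key (v, take k cs @ drop k cs) \<le> key (v0, as0 @ bs0) \<and>
      (key (v, take k cs @ drop k cs) = key (v0, as0 @ bs0) \<longrightarrow> v = v0 \<and> take k cs = as0 \<and> drop k cs = bs0)"
      using key_mono[OF Vs Vs0 Es E] by blast
    then show ?thesis by simp
  qed
  have P1: "key p \<le> key (v0, as0 @ bs0)" if "pmult ori n x y p \<noteq> 0" for p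
  proof (cases p)
    case (Pair v cs)
    then have "(\<Sum>k\<le>length cs. x (v, take k cs) * y (path_end ori n (v, take k cs), drop k cs)) \<noteq> 0"
      using that by (auto simp: pmult_apply split: if_splits)
    then obtain k where "x (v, take k cs) * y (path_end ori n (v, take k cs), drop k cs) \<noteq> 0"
      using sum.not_neutral_contains_not_neutral by blast
    then show ?thesis using trm Pair by blast
  qed
  have VP: "valid_path ori n (v0, as0 @ bs0)" using valid_cat[OF Vs0 Vt0 E] .
  have "pmult ori n x y (v0, as0 @ bs0) = (\<Sum>k\<le>length (as0 @ bs0).
      x (v0, take k (as0 @ bs0)) * y (path_end ori n (v0, take k (as0 @ bs0)), drop k (as0 @ bs0)))"
    using VP by (simp add: pmult_apply)
  also have "\<dots> = (\<Sum>k\<le>length (as0 @ bs0). if k = length as0 then x (v0, as0) * y (w, bs0) else 0)"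
  proof (rule sum.cong[OF refl])
    fix k assume k: "k \<in> {..length (as0 @ bs0)}"
    show "x (v0, take k (as0 @ bs0)) * y (path_end ori n (v0, take k (as0 @ bs0)), drop k (as0 @ bs0))
        = (if k = length as0 then x (v0, as0) * y (w, bs0) else 0)"
    proof (cases "k = length as0")
      case True then show ?thesis using E by simp
    next
      case False
      show ?thesis
      proof (rule ccontr)
        assume "\<not> ?thesis"
        then have nz: "x (v0, take k (as0 @ bs0)) * y (path_end ori n (v0, take k (as0 @ bs0)), drop k (as0 @ bs0)) \<noteq> 0"
          using False by simp
        have "take k (as0 @ bs0) = as0" using trm[OF nz] by simp
        then have "length (take k (as0 @ bs0)) = length as0" by simp
        then show False using False k by (simp add: min_def split: if_splits)
      qed
    qed
  qed
  also have "\<dots> = x (v0, as0) * y (w, bs0)" by (simp add: sum.delta)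
  finally show ?thesis using P1 by blast
qed

definition lt :: "(qpath \<Rightarrow> 'k::field) \<Rightarrow> qpath" where
  "lt a = (SOME p. a p \<noteq> 0 \<and> (\<forall>p'. a p' \<noteq> 0 \<longrightarrow> key p' \<le> key p))"

lemma lt_prop:
  assumes "finite {p. a p \<noteq> 0}" "a p0 \<noteq> 0"
  shows "a (lt a) \<noteq> 0 \<and> (\<forall>p'. a p' \<noteq> 0 \<longrightarrow> key p' \<le> key (lt a))"
proof -
  let ?S = "{p. a p \<noteq> 0}"
  have ne: "key ` ?S \<noteq> {}" using assms(2) by blast
  have fin: "finite (key ` ?S)" using assms by simp
  obtain p where p: "p \<in> ?S" "key p = Max (key ` ?S)" using Max_in[OF fin ne] by auto
  have "\<forall>p'. a p' \<noteq> 0 \<longrightarrow> key p' \<le> key p" using p Max_ge[OF fin] by auto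
  then have "\<exists>p. a p \<noteq> 0 \<and> (\<forall>p'. a p' \<noteq> 0 \<longrightarrow> key p' \<le> key p)" using p by blast
  then show ?thesis unfolding lt_def by (rule someI_ex)
qed

definition LT :: "(qpath \<Rightarrow> 'k::field) set \<Rightarrow> qpath set" where
  "LT I = {lt a | a. a \<in> I \<and> (\<exists>p. a p \<noteq> 0)}"

definition GG :: "(qpath \<Rightarrow> 'k::field) set \<Rightarrow> qpath set" where
  "GG I = {g \<in> LT I. \<forall>m < length (snd g). (fst g, take m (snd g)) \<notin> LT I}"

definition xg :: "(nat \<Rightarrow> bool) \<Rightarrow> nat \<Rightarrow> (qpath \<Rightarrow> 'k::field) set \<Rightarrow> qpath \<Rightarrow> (qpath \<Rightarrow> 'k)" where
  "xg ori n I g = (SOME a. a \<in> I \<and> a g = 1 \<and> (\<forall>p. a p \<noteq> 0 \<longrightarrow> key p \<le> key g) \<and> rh ori n (path_end ori n g) a)"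

lemma pm_e:
  assumes "a \<in> path_alg ori n"
  shows "pmult ori n a (chi (w, [])) = (\<lambda>p. if path_end ori n p = w then a p else 0)"
proof (rule ext, clarify)
  fix v as
  show "pmult ori n a (chi (w, [])) (v, as) = (if path_end ori n (v, as) = w then a (v, as) else 0)"
  proof (cases "valid_path ori n (v, as)")
    case False
    then have "a (v, as) = 0" using assms by (auto simp: path_alg_def)
    then show ?thesis using False by (simp add: pmult_apply)
  next
    case True
    have "pmult ori n a (chi (w, [])) (v, as) = (\<Sum>k\<le>length as. a (v, take k as) * chi (w, []) (path_end ori n (v, take k as), drop k as))"
      using True by (simp add: pmult_apply)
    also have "\<dots> = (\<Sum>k\<le>length as. if k = length as then (if path_end ori n (v, as) = w then a (v, as) else 0) else 0)"
      by (rule sum.cong[OF refl]) (auto simp: chi_def)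
    also have "\<dots> = (if path_end ori n (v, as) = w then a (v, as) else 0)" by (simp add: sum.delta)
    finally show ?thesis .
  qed
qed

lemma ideal_pa: "is_ideal ori n I \<Longrightarrow> a \<in> I \<Longrightarrow> a \<in> path_alg ori n"
  by (auto simp: is_ideal_def)

lemma xg_props:
  assumes I: "is_ideal ori n I" and g: "g \<in> LT I"
  shows "xg ori n I g \<in> I \<and> xg ori n I g g = 1 \<and> (\<forall>p. xg ori n I g p \<noteq> 0 \<longrightarrow> key p \<le> key g)
     \<and> rh ori n (path_end ori n g) (xg ori n I g) \<and> valid_path ori n g"
proof -
  obtain a p0 where a: "a \<in> I" "a p0 \<noteq> 0" "g = lt a" using g by (auto simp: LT_def)
  have aA: "a \<in> path_alg ori n" using ideal_pa[OF I a(1)] .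
  have lp: "a g \<noteq> 0" "\<forall>p'. a p' \<noteq> 0 \<longrightarrow> key p' \<le> key g" using lt_prop[OF pa_fin[OF aA] a(2)] a(3) by auto
  have Vg: "valid_path ori n g" using pa_valid[OF aA lp(1)] .
  define w where "w = path_end ori n g"
  have "valid_path ori n (w, [])" using pe_lt[OF Vg] by (simp add: w_def valid_path.simps)
  then have eA: "chi (w, []) \<in> path_alg ori n" by (rule chi_pa)
  define b where "b = pmult ori n a (chi (w, []))"
  have bI: "b \<in> I" using I a(1) eA by (auto simp: is_ideal_def b_def)
  have b: "b = (\<lambda>p. if path_end ori n p = w then a p else 0)" using pm_e[OF aA] by (simp add: b_def)
  define a' where "a' = (\<lambda>p. (1 / a g) * b p)"
  have "a' \<in> I" using I bI unfolding is_ideal_def a'_def by blast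
  moreover have "a' g = 1" using lp(1) by (simp add: a'_def b w_def)
  moreover have "\<forall>p. a' p \<noteq> 0 \<longrightarrow> key p \<le> key g" using lp(2) by (simp add: a'_def b split: if_splits)
  moreover have "rh ori n (path_end ori n g) a'" by (auto simp: rh_def a'_def b w_def split: if_splits)
  ultimately have "\<exists>a. a \<in> I \<and> a g = 1 \<and> (\<forall>p. a p \<noteq> 0 \<longrightarrow> key p \<le> key g) \<and> rh ori n (path_end ori n g) a"
    by blast
  then have "xg ori n I g \<in> I \<and> xg ori n I g g = 1 \<and> (\<forall>p. xg ori n I g p \<noteq> 0 \<longrightarrow> key p \<le> key g)
     \<and> rh ori n (path_end ori n g) (xg ori n I g)" unfolding xg_def by (rule someI_ex)
  then show ?thesis using Vg by blast
qed

lemma PLg: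
  assumes I: "is_ideal ori n I" and g: "g \<in> LT I" and y: "y \<in> path_alg ori n"
    and ly: "lh (path_end ori n g) y" and yt: "y t \<noteq> 0" and Ky: "\<forall>p. y p \<noteq> 0 \<longrightarrow> key p \<le> key t"
  shows "(\<forall>p. pmult ori n (xg ori n I g) y p \<noteq> 0 \<longrightarrow> key p \<le> key (fst g, snd g @ snd t))
    \<and> pmult ori n (xg ori n I g) y (fst g, snd g @ snd t) = y t"
proof -
  note X = xg_props[OF I g]
  have ft: "fst t = path_end ori n g" using ly yt unfolding lh_def by blast
  have Vt: "valid_path ori n (path_end ori n g, snd t)" using pa_valid[OF y yt] ft by (cases t) simp
  have Vg: "valid_path ori n (fst g, snd g)" using X by simp
  have E: "path_end ori n (fst g, snd g) = path_end ori n g" by simp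
  have Kx: "\<forall>p. xg ori n I g p \<noteq> 0 \<longrightarrow> key p \<le> key (fst g, snd g)" using X by simp
  have Ky': "\<forall>p. y p \<noteq> 0 \<longrightarrow> key p \<le> key (path_end ori n g, snd t)" using Ky ft by (cases t) simp
  have xA: "xg ori n I g \<in> path_alg ori n" using ideal_pa[OF I] X by blast
  have "xg ori n I g (fst g, snd g) = 1" using X by simp
  moreover have "y (path_end ori n g, snd t) = y t" using ft by (cases t) simp
  ultimately show ?thesis
    using PL[OF xA y _ ly Vg Vt E Kx Ky'] X by simp
qed

lemma GG_prefix_free:
  assumes g: "g \<in> GG I" and g': "g' \<in> GG I" and f: "fst g = fst g'" and e: "snd g @ bs = snd g' @ bs'"
  shows "g = g'"
proof -
  have aux: "length (snd h) < length (snd h') \<Longrightarrow> h \<in> GG I \<Longrightarrow> h' \<in> GG I \<Longrightarrow> fst h = fst h'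
      \<Longrightarrow> snd h @ cs = snd h' @ cs' \<Longrightarrow> False" for h h' cs cs'
  proof -
    assume l: "length (snd h) < length (snd h')" and h: "h \<in> GG I" and h': "h' \<in> GG I"
      and fh: "fst h = fst h'" and eh: "snd h @ cs = snd h' @ cs'"
    have "take (length (snd h)) (snd h @ cs) = take (length (snd h)) (snd h' @ cs')" using eh by simp
    then have "take (length (snd h)) (snd h') = snd h" using l by simp
    then have "(fst h', take (length (snd h)) (snd h')) = h" using fh by (cases h) simp
    moreover have "h \<in> LT I" using h by (simp add: GG_def)
    ultimately show False using h' l by (auto simp: GG_def)
  qed
  consider "length (snd g) < length (snd g')" | "length (snd g') < length (snd g)" | "length (snd g) = length (snd g')"
    by linarith
  then show ?thesis
  proof cases
    case 1 then show ?thesis using aux[OF 1 g g' f e] by simp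
  next
    case 2 then show ?thesis using aux[OF 2 g' g f[symmetric] e[symmetric]] by simp
  next
    case 3
    then have "snd g = snd g'" using e by (simp add: append_eq_append_conv)
    then show ?thesis using f by (simp add: prod_eq_iff)
  qed
qed

lemma FR:
  assumes I: "is_ideal ori n I" and fS: "finite S" and SG: "S \<subseteq> GG I"
    and Y: "\<forall>g\<in>S. Y g \<in> path_alg ori n \<and> lh (path_end ori n g) (Y g)"
    and Z: "(\<lambda>p. \<Sum>g\<in>S. pmult ori n (xg ori n I g) (Y g) p) = (\<lambda>_. 0)"
  shows "\<forall>g\<in>S. Y g = (\<lambda>_. 0)"
proof (rule ccontr)
  assume NT: "\<not> ?thesis"
  define S' where "S' = {g\<in>S. \<exists>p. Y g p \<noteq> 0}"
  have ne: "S' \<noteq> {}" using NT by (auto simp: S'_def)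
  have fS': "finite S'" using fS by (simp add: S'_def)
  define P where "P g = (fst g, snd g @ snd (lt (Y g)))" for g
  have ne2: "(\<lambda>g. key (P g)) ` S' \<noteq> {}" using ne by simp
  obtain gs where gs: "gs \<in> S'" "key (P gs) = Max ((\<lambda>g. key (P g)) ` S')"
    using Max_in[OF finite_imageI[OF fS'] ne2] by auto
  have gmax: "key (P g) \<le> key (P gs)" if "g \<in> S'" for g
    using gs(2) Max_ge[OF finite_imageI[OF fS'], of "key (P g)" "\<lambda>g. key (P g)"] that by auto
  have LTof: "g \<in> LT I" if "g \<in> S" for g using that SG by (auto simp: GG_def)
  have info: "(\<forall>p. pmult ori n (xg ori n I g) (Y g) p \<noteq> 0 \<longrightarrow> key p \<le> key (P g))
    \<and> pmult ori n (xg ori n I g) (Y g) (P g) = Y g (lt (Y g)) \<and> Y g (lt (Y g)) \<noteq> 0" if "g \<in> S'" for g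
  proof -
    have gS: "g \<in> S" and nz: "\<exists>p. Y g p \<noteq> 0" using that by (auto simp: S'_def)
    have YA: "Y g \<in> path_alg ori n" and lY: "lh (path_end ori n g) (Y g)" using Y gS by auto
    obtain p0 where p0: "Y g p0 \<noteq> 0" using nz by blast
    note L = lt_prop[OF pa_fin[OF YA] p0]
    show ?thesis using PLg[OF I LTof[OF gS] YA lY conjunct1[OF L] conjunct2[OF L]] L by (simp add: P_def)
  qed
  have gsS: "gs \<in> S" using gs(1) by (simp add: S'_def)
  have zero_other: "pmult ori n (xg ori n I g) (Y g) (P gs) = 0" if "g \<in> S - {gs}" for g
  proof (cases "g \<in> S'")
    case False
    then have "Y g = (\<lambda>_. 0)" using that by (auto simp: S'_def)
    then show ?thesis by (simp add: pm_zero_r)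
  next
    case True
    show ?thesis
    proof (rule ccontr)
      assume "pmult ori n (xg ori n I g) (Y g) (P gs) \<noteq> 0"
      then have "key (P gs) \<le> key (P g)" using info[OF True] by blast
      then have "key (P gs) = key (P g)" using gmax[OF True] by simp
      then have "P gs = P g" by (rule key_inj)
      then have "fst gs = fst g" "snd gs @ snd (lt (Y gs)) = snd g @ snd (lt (Y g))" by (auto simp: P_def)
      then have "gs = g" using GG_prefix_free[of gs I g] SG gsS that by auto
      then show False using that by simp
    qed
  qed
  have "(\<Sum>g\<in>S. pmult ori n (xg ori n I g) (Y g) (P gs))
      = pmult ori n (xg ori n I gs) (Y gs) (P gs) + (\<Sum>g\<in>S - {gs}. pmult ori n (xg ori n I g) (Y g) (P gs))"
    using sum.remove[OF fS gsS] by simp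
  also have "(\<Sum>g\<in>S - {gs}. pmult ori n (xg ori n I g) (Y g) (P gs)) = 0"
    using zero_other by simp
  finally have "(\<Sum>g\<in>S. pmult ori n (xg ori n I g) (Y g) (P gs)) \<noteq> 0" using info[OF gs(1)] by simp
  then show False using fun_cong[OF Z, of "P gs"] by simp
qed

lemma rel_smult: "x \<in> tens_rel ori n I J \<Longrightarrow> (\<lambda>q. c * x q) \<in> tens_rel ori n I J"
  by (rule tens_rel.smult)

lemma rel_neg: "x \<in> tens_rel ori n I J \<Longrightarrow> (\<lambda>q. - x q) \<in> tens_rel ori n I J"
  using tens_rel.smult[of x ori n I J "-1"] by simp

lemma rel_add: "x \<in> tens_rel ori n I J \<Longrightarrow> y \<in> tens_rel ori n I J \<Longrightarrow> (\<lambda>q. x q + y q) \<in> tens_rel ori n I J"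
  by (rule tens_rel.add)

lemma rel_diff: "x \<in> tens_rel ori n I J \<Longrightarrow> y \<in> tens_rel ori n I J \<Longrightarrow> (\<lambda>q. x q - y q) \<in> tens_rel ori n I J"
  using rel_add[OF _ rel_neg[of y]] by simp

lemma rel_sum: "finite S \<Longrightarrow> (\<forall>g\<in>S. f g \<in> tens_rel ori n I J) \<Longrightarrow> (\<lambda>q. \<Sum>g\<in>S. f g q) \<in> tens_rel ori n I J"
proof (induction S rule: finite_induct)
  case empty then show ?case using tens_rel.zero by simp
next
  case (insert x F)
  then show ?case using rel_add[of "f x" ori n I J "\<lambda>q. \<Sum>g\<in>F. f g q"] by simp
qed

lemma rel_eq: "x \<in> tens_rel ori n I J \<Longrightarrow> x = y \<Longrightarrow> y \<in> tens_rel ori n I J" by simp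

lemma delta_zero_r:
  assumes J: "is_ideal ori n J" and a: "a \<in> I"
  shows "delta (a, \<lambda>_. 0) \<in> tens_rel ori n I J"
proof -
  have z: "(\<lambda>_. 0) \<in> J" using J by (simp add: is_ideal_def)
  show ?thesis using tens_rel.smult_right[OF a z, where c=0 and ori=ori and n=n] by simp
qed

lemma delta_zero_l:
  assumes I: "is_ideal ori n I" and b: "b \<in> J"
  shows "delta (\<lambda>_. 0, b) \<in> tens_rel ori n I J"
proof -
  have z: "(\<lambda>_. 0) \<in> I" using I by (simp add: is_ideal_def)
  show ?thesis using tens_rel.smult_left[OF z b, where c=0 and ori=ori and n=n] by simp
qed

definition CC :: "(nat \<Rightarrow> bool) \<Rightarrow> nat \<Rightarrow> (qpath \<Rightarrow> 'k::field) set \<Rightarrow> qpath set \<Rightarrow> (qpath \<Rightarrow> (qpath \<Rightarrow> 'k))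
    \<Rightarrow> ((qpath \<Rightarrow> 'k) \<times> (qpath \<Rightarrow> 'k) \<Rightarrow> 'k)" where
  "CC ori n I S Y = (\<lambda>q. \<Sum>g\<in>S. delta (xg ori n I g, Y g) q)"

definition Can :: "(nat \<Rightarrow> bool) \<Rightarrow> nat \<Rightarrow> (qpath \<Rightarrow> 'k::field) set \<Rightarrow> (qpath \<Rightarrow> 'k) set
    \<Rightarrow> ((qpath \<Rightarrow> 'k) \<times> (qpath \<Rightarrow> 'k) \<Rightarrow> 'k) \<Rightarrow> bool" where
  "Can ori n I J x \<longleftrightarrow> (\<exists>S Y. finite S \<and> S \<subseteq> GG I \<and> (\<forall>g\<in>S. Y g \<in> J \<and> lh (path_end ori n g) (Y g))
     \<and> (\<lambda>q. x q - CC ori n I S Y q) \<in> tens_rel ori n I J)"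

lemma xg_in: "is_ideal ori n I \<Longrightarrow> g \<in> GG I \<Longrightarrow> xg ori n I g \<in> I"
  using xg_props[of ori n I g] by (auto simp: GG_def)

lemma C_extend:
  assumes I: "is_ideal ori n I" and J: "is_ideal ori n J" and T: "finite T" "S \<subseteq> T" "T \<subseteq> GG I"
  shows "(\<lambda>q. CC ori n I S Y q - CC ori n I T (\<lambda>g. if g \<in> S then Y g else (\<lambda>_. 0)) q) \<in> tens_rel ori n I J"
proof -
  have R: "(\<lambda>q. - (\<Sum>g\<in>T - S. delta (xg ori n I g, \<lambda>_. 0) q)) \<in> tens_rel ori n I J"
    apply (rule rel_neg)
    apply (rule rel_sum)
    using T delta_zero_r[OF J xg_in[OF I]] by auto
  have "CC ori n I T (\<lambda>g. if g \<in> S then Y g else (\<lambda>_. 0)) q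
      = CC ori n I S Y q + (\<Sum>g\<in>T - S. delta (xg ori n I g, \<lambda>_. 0) q)" for q
  proof -
    have "CC ori n I T (\<lambda>g. if g \<in> S then Y g else (\<lambda>_. 0)) q
       = (\<Sum>g\<in>T - S. delta (xg ori n I g, if g \<in> S then Y g else (\<lambda>_. 0)) q)
         + (\<Sum>g\<in>S. delta (xg ori n I g, if g \<in> S then Y g else (\<lambda>_. 0)) q)"
      unfolding CC_def by (rule sum.subset_diff[OF T(2) T(1)])
    also have "(\<Sum>g\<in>S. delta (xg ori n I g, if g \<in> S then Y g else (\<lambda>_. 0)) q) = CC ori n I S Y q"
      unfolding CC_def by (rule sum.cong) auto
    also have "(\<Sum>g\<in>T - S. delta (xg ori n I g, if g \<in> S then Y g else (\<lambda>_. 0)) q)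
        = (\<Sum>g\<in>T - S. delta (xg ori n I g, \<lambda>_. 0) q)"
      by (rule sum.cong) auto
    finally show ?thesis by (simp add: add.commute)
  qed
  then show ?thesis using R by simp
qed

lemma C_add:
  assumes I: "is_ideal ori n I" and T: "finite T" "T \<subseteq> GG I"
    and Y: "\<forall>g\<in>T. Y g \<in> J \<and> Y' g \<in> J"
  shows "(\<lambda>q. CC ori n I T Y q + CC ori n I T Y' q - CC ori n I T (\<lambda>g p. Y g p + Y' g p) q) \<in> tens_rel ori n I J"
proof -
  have "(\<lambda>q. \<Sum>g\<in>T. - (delta (xg ori n I g, \<lambda>p. Y g p + Y' g p) q - delta (xg ori n I g, Y g) q - delta (xg ori n I g, Y' g) q))
     \<in> tens_rel ori n I J"
    apply (rule rel_sum[OF T(1)])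
    apply (intro ballI rel_neg tens_rel.add_right xg_in[OF I])
    using T(2) Y by auto
  moreover have "(\<lambda>q. \<Sum>g\<in>T. - (delta (xg ori n I g, \<lambda>p. Y g p + Y' g p) q - delta (xg ori n I g, Y g) q - delta (xg ori n I g, Y' g) q))
     = (\<lambda>q. CC ori n I T Y q + CC ori n I T Y' q - CC ori n I T (\<lambda>g p. Y g p + Y' g p) q)"
    by (simp add: CC_def sum.distrib sum_subtractf sum_negf fun_eq_iff algebra_simps)
  ultimately show ?thesis by simp
qed

lemma C_smult:
  assumes I: "is_ideal ori n I" and T: "finite T" "T \<subseteq> GG I"
    and Y: "\<forall>g\<in>T. Y g \<in> J"
  shows "(\<lambda>q. c * CC ori n I T Y q - CC ori n I T (\<lambda>g p. c * Y g p) q) \<in> tens_rel ori n I J"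
proof -
  have "(\<lambda>q. \<Sum>g\<in>T. - (delta (xg ori n I g, \<lambda>p. c * Y g p) q - c * delta (xg ori n I g, Y g) q))
     \<in> tens_rel ori n I J"
    apply (rule rel_sum[OF T(1)])
    apply (intro ballI rel_neg tens_rel.smult_right xg_in[OF I])
    using T(2) Y by auto
  moreover have "(\<lambda>q. \<Sum>g\<in>T. - (delta (xg ori n I g, \<lambda>p. c * Y g p) q - c * delta (xg ori n I g, Y g) q))
     = (\<lambda>q. c * CC ori n I T Y q - CC ori n I T (\<lambda>g p. c * Y g p) q)"
    by (simp add: CC_def sum.distrib sum_subtractf sum_negf sum_distrib_left)
  ultimately show ?thesis by simp
qed



lemma Can0: "x \<in> tens_rel ori n I J \<Longrightarrow> Can ori n I J x"
  unfolding Can_def by (rule exI[of _ "{}"], rule exI[of _ "\<lambda>_. \<lambda>_. 0"]) (simp add: CC_def)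

lemma Can1:
  assumes "Can ori n I J x" "(\<lambda>q. y q - x q) \<in> tens_rel ori n I J"
  shows "Can ori n I J y"
proof -
  obtain S Y where SY: "finite S" "S \<subseteq> GG I" "\<forall>g\<in>S. Y g \<in> J \<and> lh (path_end ori n g) (Y g)"
     "(\<lambda>q. x q - CC ori n I S Y q) \<in> tens_rel ori n I J" using assms(1) unfolding Can_def by blast
  have "(\<lambda>q. y q - CC ori n I S Y q) \<in> tens_rel ori n I J"
    using rel_add[OF assms(2) SY(4)] by simp
  then show ?thesis unfolding Can_def using SY by blast
qed

lemma Can_single:
  assumes "g \<in> GG I" "y \<in> J" "lh (path_end ori n g) y"
  shows "Can ori n I J (delta (xg ori n I g, y))"
  unfolding Can_def
  apply (rule exI[of _ "{g}"], rule exI[of _ "\<lambda>_. y"])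
  using assms tens_rel.zero by (simp add: CC_def)

lemma lh_zero: "lh w (\<lambda>_. 0)" by (simp add: lh_def)

lemma lh_add: "lh w a \<Longrightarrow> lh w b \<Longrightarrow> lh w (\<lambda>p. a p + b p)"
  unfolding lh_def by (metis add.right_neutral)

lemma lh_smult: "lh w a \<Longrightarrow> lh w (\<lambda>p. c * a p)"
  unfolding lh_def by (metis mult_zero_right)

lemma Can_smult:
  assumes I: "is_ideal ori n I" and J: "is_ideal ori n J" and C: "Can ori n I J x"
  shows "Can ori n I J (\<lambda>q. c * x q)"
proof -
  obtain S Y where SY: "finite S" "S \<subseteq> GG I" "\<forall>g\<in>S. Y g \<in> J \<and> lh (path_end ori n g) (Y g)"
     "(\<lambda>q. x q - CC ori n I S Y q) \<in> tens_rel ori n I J" using C unfolding Can_def by blast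
  have YJ: "\<forall>g\<in>S. Y g \<in> J" using SY(3) by blast
  have "(\<lambda>q. c * (x q - CC ori n I S Y q) + (c * CC ori n I S Y q - CC ori n I S (\<lambda>g p. c * Y g p) q)) \<in> tens_rel ori n I J"
    by (rule rel_add[OF rel_smult[OF SY(4)] C_smult[OF I SY(1) SY(2) YJ]])
  moreover have "(\<lambda>q. c * (x q - CC ori n I S Y q) + (c * CC ori n I S Y q - CC ori n I S (\<lambda>g p. c * Y g p) q))
     = (\<lambda>q. c * x q - CC ori n I S (\<lambda>g p. c * Y g p) q)"
    by (rule ext) (simp add: right_diff_distrib)
  ultimately have RR: "(\<lambda>q. c * x q - CC ori n I S (\<lambda>g p. c * Y g p) q) \<in> tens_rel ori n I J"
    by simp
  have JJ: "\<forall>g\<in>S. (\<lambda>p. c * Y g p) \<in> J \<and> lh (path_end ori n g) (\<lambda>p. c * Y g p)"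
  proof
    fix g assume "g \<in> S"
    then have "Y g \<in> J" "lh (path_end ori n g) (Y g)" using SY(3) by auto
    then show "(\<lambda>p. c * Y g p) \<in> J \<and> lh (path_end ori n g) (\<lambda>p. c * Y g p)"
      using J lh_smult unfolding is_ideal_def by blast
  qed
  show ?thesis unfolding Can_def
    by (rule exI[of _ S], rule exI[of _ "\<lambda>g p. c * Y g p"]) (intro conjI SY(1) SY(2) JJ RR)
qed

lemma Can_add:
  assumes I: "is_ideal ori n I" and J: "is_ideal ori n J" and C1: "Can ori n I J x" and C2: "Can ori n I J y"
  shows "Can ori n I J (\<lambda>q. x q + y q)"
proof -
  obtain S Y where SY: "finite S" "S \<subseteq> GG I" "\<forall>g\<in>S. Y g \<in> J \<and> lh (path_end ori n g) (Y g)"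
     "(\<lambda>q. x q - CC ori n I S Y q) \<in> tens_rel ori n I J" using C1 unfolding Can_def by blast
  obtain S' Y' where SY': "finite S'" "S' \<subseteq> GG I" "\<forall>g\<in>S'. Y' g \<in> J \<and> lh (path_end ori n g) (Y' g)"
     "(\<lambda>q. y q - CC ori n I S' Y' q) \<in> tens_rel ori n I J" using C2 unfolding Can_def by blast
  define T where "T = S \<union> S'"
  define Y0 where "Y0 = (\<lambda>g. if g \<in> S then Y g else (\<lambda>_. 0))"
  define Y0' where "Y0' = (\<lambda>g. if g \<in> S' then Y' g else (\<lambda>_. 0))"
  have T: "finite T" "T \<subseteq> GG I" using SY SY' by (auto simp: T_def)
  have z: "(\<lambda>_. 0) \<in> J" using J by (simp add: is_ideal_def)
  have Y0J: "\<forall>g\<in>T. Y0 g \<in> J \<and> Y0' g \<in> J" using SY(3) SY'(3) z by (auto simp: Y0_def Y0'_def)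
  have e1: "(\<lambda>q. CC ori n I S Y q - CC ori n I T Y0 q) \<in> tens_rel ori n I J"
    unfolding Y0_def by (rule C_extend[OF I J T(1) _ T(2)]) (simp add: T_def)
  have e2: "(\<lambda>q. CC ori n I S' Y' q - CC ori n I T Y0' q) \<in> tens_rel ori n I J"
    unfolding Y0'_def by (rule C_extend[OF I J T(1) _ T(2)]) (simp add: T_def)
  have e3: "(\<lambda>q. CC ori n I T Y0 q + CC ori n I T Y0' q - CC ori n I T (\<lambda>g p. Y0 g p + Y0' g p) q) \<in> tens_rel ori n I J"
    by (rule C_add[OF I T Y0J])
  have "(\<lambda>q. (x q - CC ori n I S Y q) + (y q - CC ori n I S' Y' q) + (CC ori n I S Y q - CC ori n I T Y0 q)
      + (CC ori n I S' Y' q - CC ori n I T Y0' q)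
      + (CC ori n I T Y0 q + CC ori n I T Y0' q - CC ori n I T (\<lambda>g p. Y0 g p + Y0' g p) q)) \<in> tens_rel ori n I J"
    by (intro rel_add SY(4) SY'(4) e1 e2 e3)
  moreover have "(\<lambda>q. (x q - CC ori n I S Y q) + (y q - CC ori n I S' Y' q) + (CC ori n I S Y q - CC ori n I T Y0 q)
      + (CC ori n I S' Y' q - CC ori n I T Y0' q)
      + (CC ori n I T Y0 q + CC ori n I T Y0' q - CC ori n I T (\<lambda>g p. Y0 g p + Y0' g p) q))
     = (\<lambda>q. (x q + y q) - CC ori n I T (\<lambda>g p. Y0 g p + Y0' g p) q)"
    by (rule ext) (simp add: algebra_simps)
  ultimately have RR: "(\<lambda>q. (x q + y q) - CC ori n I T (\<lambda>g p. Y0 g p + Y0' g p) q) \<in> tens_rel ori n I J"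
    by simp
  have JJ: "\<forall>g\<in>T. (\<lambda>p. Y0 g p + Y0' g p) \<in> J \<and> lh (path_end ori n g) (\<lambda>p. Y0 g p + Y0' g p)"
  proof
    fix g assume g: "g \<in> T"
    have "lh (path_end ori n g) (Y0 g)" using SY(3) lh_zero by (auto simp: Y0_def)
    moreover have "lh (path_end ori n g) (Y0' g)" using SY'(3) lh_zero by (auto simp: Y0'_def)
    moreover have "(\<lambda>p. Y0 g p + Y0' g p) \<in> J" using Y0J g J unfolding is_ideal_def by blast
    ultimately show "(\<lambda>p. Y0 g p + Y0' g p) \<in> J \<and> lh (path_end ori n g) (\<lambda>p. Y0 g p + Y0' g p)"
      using lh_add by blast
  qed
  show ?thesis unfolding Can_def
    by (rule exI[of _ T], rule exI[of _ "\<lambda>g p. Y0 g p + Y0' g p"]) (intro conjI T(1) T(2) JJ RR)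
qed

lemma fin_B: "finite {p. valid_path ori n p \<and> key p \<le> K}"
proof (rule finite_subset)
  show "{p. valid_path ori n p \<and> key p \<le> K} \<subseteq> {..<n} \<times> {as. set as \<subseteq> {..<n} \<and> length as \<le> fst K}"
  proof
    fix p assume "p \<in> {p. valid_path ori n p \<and> key p \<le> K}"
    then show "p \<in> {..<n} \<times> {as. set as \<subseteq> {..<n} \<and> length as \<le> fst K}"
      by (cases p; cases K) (auto simp: valid_path.simps key_def less_eq_prod_def)
  qed
  show "finite ({..<n} \<times> {as. set as \<subseteq> {..<n} \<and> length as \<le> fst K})"
    by (intro finite_cartesian_product finite_lists_length_le) auto
qed

lemma lh_chi_mult:
  "lh (fst q) (pmult ori n (chi q) b)"
  unfolding lh_def
proof (intro allI impI)
  fix p assume nz: "pmult ori n (chi q) b p \<noteq> 0"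
  obtain v cs where p: "p = (v, cs)" by (cases p)
  have "(\<Sum>k\<le>length cs. chi q (v, take k cs) * b (path_end ori n (v, take k cs), drop k cs)) \<noteq> 0"
    using nz p by (auto simp: pmult_apply split: if_splits)
  then obtain k where "chi q (v, take k cs) * b (path_end ori n (v, take k cs), drop k cs) \<noteq> 0"
    using sum.not_neutral_contains_not_neutral by blast
  then have "(v, take k cs) = q" by (auto simp: chi_def split: if_splits)
  then show "fst p = fst q" using p by auto
qed

lemma id_add: "is_ideal ori n I \<Longrightarrow> x \<in> I \<Longrightarrow> y \<in> I \<Longrightarrow> (\<lambda>p. x p + y p) \<in> I"
  unfolding is_ideal_def by blast
lemma id_smult: "is_ideal ori n I \<Longrightarrow> x \<in> I \<Longrightarrow> (\<lambda>p. c * x p) \<in> I"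
  unfolding is_ideal_def by blast
lemma id_ml: "is_ideal ori n I \<Longrightarrow> r \<in> path_alg ori n \<Longrightarrow> x \<in> I \<Longrightarrow> pmult ori n r x \<in> I"
  unfolding is_ideal_def by blast
lemma id_mr: "is_ideal ori n I \<Longrightarrow> r \<in> path_alg ori n \<Longrightarrow> x \<in> I \<Longrightarrow> pmult ori n x r \<in> I"
  unfolding is_ideal_def by blast

lemma SP_aux:
  assumes I: "is_ideal ori n I" and J: "is_ideal ori n J"
  shows "\<forall>a. a \<in> I \<longrightarrow> card {p. valid_path ori n p \<and> key p \<le> key (lt a)} = N
     \<longrightarrow> (\<forall>b\<in>J. Can ori n I J (delta (a, b)))"
proof (induction N rule: less_induct)
  case (less N)
  show ?case
  proof (intro allI impI ballI)
    fix a b assume aI: "a \<in> I" and Na: "card {p. valid_path ori n p \<and> key p \<le> key (lt a)} = N" and bJ: "b \<in> J"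
    have aA: "a \<in> path_alg ori n" using ideal_pa[OF I aI] .
    show "Can ori n I J (delta (a, b))"
    proof (cases "\<exists>p0. a p0 \<noteq> 0")
      case False
      then have "a = (\<lambda>_. 0)" by auto
      then show ?thesis using Can0 delta_zero_l[OF I bJ] by simp
    next
      case True
      then obtain p0 where p0: "a p0 \<noteq> 0" by blast
      define p where "p = lt a"
      note L = lt_prop[OF pa_fin[OF aA] p0]
      have ap: "a p \<noteq> 0" and Kp: "\<forall>r. a r \<noteq> 0 \<longrightarrow> key r \<le> key p" using L by (auto simp: p_def)
      have Vp: "valid_path ori n p" using pa_valid[OF aA ap] .
      have pLT: "p \<in> LT I" unfolding LT_def p_def using aI p0 by blast
      obtain v cs where pv: "p = (v, cs)" by (cases p)
      define m where "m = (LEAST m. (v, take m cs) \<in> LT I)"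
      have ex: "(v, take (length cs) cs) \<in> LT I" using pLT pv by simp
      have gLT: "(v, take m cs) \<in> LT I" unfolding m_def by (rule LeastI[where P="\<lambda>m. (v, take m cs) \<in> LT I", OF ex])
      have mle: "m \<le> length cs" unfolding m_def by (rule Least_le[where P="\<lambda>m. (v, take m cs) \<in> LT I", OF ex])
      have nl: "(v, take m' cs) \<notin> LT I" if "m' < m" for m' using not_less_Least[where P="\<lambda>m. (v, take m cs) \<in> LT I", OF that[unfolded m_def]] by simp
      define g where "g = (v, take m cs)"
      have gGG: "g \<in> GG I"
        unfolding GG_def g_def using gLT nl mle by (auto simp: min_def)
      have gLT': "g \<in> LT I" using gLT by (simp add: g_def)
      define q where "q = (path_end ori n g, drop m cs)"
      have Vq: "valid_path ori n q" unfolding q_def g_def using valid_drop[OF Vp[unfolded pv]] .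
      have chiA: "chi q \<in> path_alg ori n" by (rule chi_pa[OF Vq])
      define u where "u = pmult ori n (xg ori n I g) (chi q)"
      have xgI: "xg ori n I g \<in> I" using xg_in[OF I gGG] .
      have uI: "u \<in> I" unfolding u_def by (rule id_mr[OF I chiA xgI])
      have lq: "lh (path_end ori n g) (chi q)" by (auto simp: lh_def chi_def q_def split: if_splits)
      have chq: "chi q q \<noteq> (0::'a)" by (simp add: chi_def)
      have Kq: "\<forall>r. chi q r \<noteq> (0::'a) \<longrightarrow> key r \<le> key q" by (simp add: chi_def)
      have gq: "(fst g, snd g @ snd q) = p" by (simp add: g_def q_def pv)
      have U: "(\<forall>r. u r \<noteq> 0 \<longrightarrow> key r \<le> key p) \<and> u p = 1"
        using PLg[OF I gLT' chiA lq chq Kq] gq by (simp add: u_def chi_def)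
      define a' where "a' = (\<lambda>r. a r + (- a p) * u r)"
      have a'I: "a' \<in> I" unfolding a'_def by (rule id_add[OF I aI id_smult[OF I uI]])
      have a'p: "a' p = 0" using U by (simp add: a'_def)
      have Ka': "key r < key p" if "a' r \<noteq> 0" for r
      proof -
        have "a r \<noteq> 0 \<or> u r \<noteq> 0" using that by (auto simp: a'_def)
        then have "key r \<le> key p" using Kp U by blast
        moreover have "r \<noteq> p" using that a'p by auto
        then have "key r \<noteq> key p" using key_inj by blast
        ultimately show ?thesis by simp
      qed
      have Ca': "Can ori n I J (delta (a', b))"
      proof (cases "\<exists>r0. a' r0 \<noteq> 0")
        case False
        then have "a' = (\<lambda>_. 0)" by auto
        then show ?thesis using Can0 delta_zero_l[OF I bJ] by simp
      next
        case True
        then obtain r0 where r0: "a' r0 \<noteq> 0" by blast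
        have a'A: "a' \<in> path_alg ori n" using ideal_pa[OF I a'I] .
        have la: "a' (lt a') \<noteq> 0" using lt_prop[OF pa_fin[OF a'A] r0] by blast
        have kl: "key (lt a') < key p" using Ka'[OF la] .
        have sub: "{r. valid_path ori n r \<and> key r \<le> key (lt a')} \<subset> {r. valid_path ori n r \<and> key r \<le> key p}"
        proof (rule psubsetI)
          show "{r. valid_path ori n r \<and> key r \<le> key (lt a')} \<subseteq> {r. valid_path ori n r \<and> key r \<le> key p}"
            using kl by auto
          have "p \<in> {r. valid_path ori n r \<and> key r \<le> key p}" using Vp by simp
          moreover have "p \<notin> {r. valid_path ori n r \<and> key r \<le> key (lt a')}" using kl by (auto simp: not_le)
          ultimately show "{r. valid_path ori n r \<and> key r \<le> key (lt a')} \<noteq> {r. valid_path ori n r \<and> key r \<le> key p}"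
            by blast
        qed
        have "card {r. valid_path ori n r \<and> key r \<le> key (lt a')} < N"
          using psubset_card_mono[OF fin_B sub] Na by (simp add: p_def)
        then show ?thesis using less.IH a'I bJ by blast
      qed
      have y: "pmult ori n (chi q) b \<in> J" by (rule id_ml[OF J chiA bJ])
      have ly: "lh (path_end ori n g) (pmult ori n (chi q) b)"
        using lh_chi_mult[of q ori n b] by (simp add: q_def)
      have Cy: "Can ori n I J (\<lambda>r. delta (a', b) r + a p * delta (xg ori n I g, pmult ori n (chi q) b) r)"
        by (rule Can_add[OF I J Ca' Can_smult[OF I J Can_single[OF gGG y ly]]])
      have apuI: "(\<lambda>r. a p * u r) \<in> I" by (rule id_smult[OF I uI])
      have R1: "(\<lambda>r. delta (\<lambda>s. a' s + a p * u s, b) r - delta (a', b) r - delta (\<lambda>s. a p * u s, b) r) \<in> tens_rel ori n I J"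
        by (rule tens_rel.add_left[OF a'I apuI bJ])
      have R2: "(\<lambda>r. delta (\<lambda>s. a p * u s, b) r - a p * delta (u, b) r) \<in> tens_rel ori n I J"
        by (rule tens_rel.smult_left[OF uI bJ])
      have R3: "(\<lambda>r. delta (u, b) r - delta (xg ori n I g, pmult ori n (chi q) b) r) \<in> tens_rel ori n I J"
        unfolding u_def by (rule tens_rel.balanced[OF xgI bJ chiA])
      have aeq: "(\<lambda>s. a' s + a p * u s) = a" by (rule ext) (simp add: a'_def)
      have "(\<lambda>r. (delta (\<lambda>s. a' s + a p * u s, b) r - delta (a', b) r - delta (\<lambda>s. a p * u s, b) r)
          + (delta (\<lambda>s. a p * u s, b) r - a p * delta (u, b) r)
          + a p * (delta (u, b) r - delta (xg ori n I g, pmult ori n (chi q) b) r)) \<in> tens_rel ori n I J"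
        by (intro rel_add R1 R2 rel_smult[OF R3])
      moreover have "(\<lambda>r. (delta (\<lambda>s. a' s + a p * u s, b) r - delta (a', b) r - delta (\<lambda>s. a p * u s, b) r)
          + (delta (\<lambda>s. a p * u s, b) r - a p * delta (u, b) r)
          + a p * (delta (u, b) r - delta (xg ori n I g, pmult ori n (chi q) b) r))
        = (\<lambda>r. delta (a, b) r - (delta (a', b) r + a p * delta (xg ori n I g, pmult ori n (chi q) b) r))"
        unfolding aeq by (rule ext) (simp add: algebra_simps)
      ultimately have "(\<lambda>r. delta (a, b) r - (delta (a', b) r + a p * delta (xg ori n I g, pmult ori n (chi q) b) r))
          \<in> tens_rel ori n I J" by simp
      then show ?thesis by (rule Can1[OF Cy])
    qed
  qed
qed

lemma SP:
  assumes I: "is_ideal ori n I" and J: "is_ideal ori n J" and a: "a \<in> I" and b: "b \<in> J"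
  shows "Can ori n I J (delta (a, b))"
  using SP_aux[OF I J] a b by blast

lemma free_Can:
  assumes I: "is_ideal ori n I" and J: "is_ideal ori n J" and x: "x \<in> free_mod I J"
  shows "Can ori n I J x"
proof -
  have fx: "finite {q. x q \<noteq> 0}" and sx: "{q. x q \<noteq> 0} \<subseteq> I \<times> J" using x by (auto simp: free_mod_def)
  have gen: "F \<subseteq> I \<times> J \<Longrightarrow> Can ori n I J (\<lambda>q'. \<Sum>r\<in>F. x r * delta r q')" if "finite F" for F
    using that
  proof (induction F rule: finite_induct)
    case empty
    show ?case using Can0[OF tens_rel.zero] by simp
  next
    case (insert r F)
    have r: "fst r \<in> I" "snd r \<in> J" using insert.prems by auto
    have C1: "Can ori n I J (\<lambda>q'. x r * delta r q')"
      using Can_smult[OF I J SP[OF I J r]] by simp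
    have C2: "Can ori n I J (\<lambda>q'. \<Sum>r\<in>F. x r * delta r q')" using insert by simp
    show ?case using Can_add[OF I J C1 C2] insert.hyps by simp
  qed
  have "(\<lambda>q'. \<Sum>r\<in>{q. x q \<noteq> 0}. x r * delta r q') = x"
  proof
    fix q'
    have "(\<Sum>r\<in>{q. x q \<noteq> 0}. x r * delta r q') = (\<Sum>r\<in>{q. x q \<noteq> 0}. if r = q' then x r else 0)"
      by (rule sum.cong) (auto simp: delta_def)
    also have "\<dots> = x q'" using fx by (simp add: sum.delta)
    finally show "(\<Sum>r\<in>{q. x q \<noteq> 0}. x r * delta r q') = x q'" .
  qed
  then show ?thesis using gen[OF fx sx] by simp
qed

lemma fin_CC: "finite S \<Longrightarrow> finite {q. CC ori n I S Y q \<noteq> 0}"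
proof (induction S rule: finite_induct)
  case empty then show ?case by (simp add: CC_def)
next
  case (insert g F)
  have "CC ori n I (insert g F) Y = (\<lambda>q. delta (xg ori n I g, Y g) q + CC ori n I F Y q)"
    using insert.hyps by (simp add: CC_def)
  then show ?case using fin_add[OF fin_delta insert.IH] by simp
qed

lemma tm_CC: "finite S \<Longrightarrow> tens_mult ori n (CC ori n I S Y) = (\<lambda>p. \<Sum>g\<in>S. pmult ori n (xg ori n I g) (Y g) p)"
proof (induction S rule: finite_induct)
  case empty then show ?case by (simp add: CC_def tens_mult_def)
next
  case (insert g F)
  have "CC ori n I (insert g F) Y = (\<lambda>q. delta (xg ori n I g, Y g) q + CC ori n I F Y q)"
    using insert.hyps by (simp add: CC_def)
  moreover have "tens_mult ori n (\<lambda>q. delta (xg ori n I g, Y g) q + CC ori n I F Y q)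
     = (\<lambda>p. tens_mult ori n (delta (xg ori n I g, Y g)) p + tens_mult ori n (CC ori n I F Y) p)"
    by (rule tm_add[OF fin_delta fin_CC[OF insert.hyps(1)]])
  ultimately show ?case using insert by (simp add: tm_delta)
qed

theorem lemma10:
  fixes ori :: "nat \<Rightarrow> bool" and n :: nat
    and I J :: "(qpath \<Rightarrow> 'k::field) set"
  assumes "alg_closed TYPE('k)"
    and "admissible ori n"
    and "is_ideal ori n I" and "is_ideal ori n J"
  shows "tens_mult ori n ` free_mod I J = ideal_prod ori n I J
         \<and> (\<forall>x\<in>free_mod I J. tens_mult ori n x = (\<lambda>_. 0) \<longleftrightarrow> x \<in> tens_rel ori n I J)"
proof
  note I = assms(3) and J = assms(4)
  show "tens_mult ori n ` free_mod I J = ideal_prod ori n I J" by (rule image_eq[OF I])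
  show "\<forall>x\<in>free_mod I J. tens_mult ori n x = (\<lambda>_. 0) \<longleftrightarrow> x \<in> tens_rel ori n I J"
  proof (intro ballI iffI)
    fix x assume "x \<in> tens_rel ori n I J"
    then show "tens_mult ori n x = (\<lambda>_. 0)" using rel_tm by blast
  next
    fix x assume x: "x \<in> free_mod I J" and tz: "tens_mult ori n x = (\<lambda>_. 0)"
    obtain S Y where SY: "finite S" "S \<subseteq> GG I" "\<forall>g\<in>S. Y g \<in> J \<and> lh (path_end ori n g) (Y g)"
       and R: "(\<lambda>q. x q - CC ori n I S Y q) \<in> tens_rel ori n I J"
      using free_Can[OF I J x] unfolding Can_def by blast
    have fx: "finite {q. x q \<noteq> 0}" using x by (simp add: free_mod_def)
    have "tens_mult ori n (\<lambda>q. x q - CC ori n I S Y q) = (\<lambda>_. 0)" using rel_tm[OF R] by blast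
    then have "(\<lambda>p. tens_mult ori n x p - tens_mult ori n (CC ori n I S Y) p) = (\<lambda>_. 0)"
      using tm_diff[OF fx fin_CC[OF SY(1)]] by simp
    then have "tens_mult ori n (CC ori n I S Y) = (\<lambda>_. 0)" using tz by (simp add: fun_eq_iff)
    then have Z: "(\<lambda>p. \<Sum>g\<in>S. pmult ori n (xg ori n I g) (Y g) p) = (\<lambda>_. 0)" using tm_CC[OF SY(1), of ori n I Y] by simp
    have YA: "\<forall>g\<in>S. Y g \<in> path_alg ori n \<and> lh (path_end ori n g) (Y g)"
      using SY(3) ideal_pa[OF J] by blast
    have Y0: "\<forall>g\<in>S. Y g = (\<lambda>_. 0)" by (rule FR[OF I SY(1) SY(2) YA Z])
    have "CC ori n I S Y = (\<lambda>q. \<Sum>g\<in>S. delta (xg ori n I g, \<lambda>_. 0) q)"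
      unfolding CC_def using Y0 by (intro ext sum.cong) auto
    moreover have "(\<lambda>q. \<Sum>g\<in>S. delta (xg ori n I g, \<lambda>_. 0) q) \<in> tens_rel ori n I J"
      using SY(1) SY(2) by (intro rel_sum) (auto intro: delta_zero_r[OF J xg_in[OF I]])
    ultimately have CR: "CC ori n I S Y \<in> tens_rel ori n I J" by simp
    have "(\<lambda>q. (x q - CC ori n I S Y q) + CC ori n I S Y q) \<in> tens_rel ori n I J"
      by (rule rel_add[OF R CR])
    then show "x \<in> tens_rel ori n I J" by simp
  qed
qed

end
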